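(* Let $\mathbb O'_+=\{x\in\mathbb O':|x|^2>0\}$ and $\mathcal U=U_1\cup U_2\cup U_3\subset\mathbb O'^3$ with $U_1=\{(1,y,z):1+|y|^2+|z|^2>0\}$, $U_2=\{(x,1,z):|x|^2+1+|z|^2>0\}$, $U_3=\{(x,y,1):|x|^2+|y|^2+1>0\}$. The relation on $\mathcal U$ given by $[a,b,c]\sim[d,e,f]$ iff there exists $\lambda\in\mathbb O'_+$ with $a=d\lambda$, $b=e\lambda$, $c=f\lambda$ is an equivalence relation.
   Context: The para-octonions $\mathbb O'$ are $\mathbb H\oplus\mathbb H$ with multiplication $(q_1,q_2)(p_1,p_2)=(q_1p_1+\bar p_2q_2,\ p_2q_1+q_2\bar p_1)$, unit $(1,0)$, conjugation $\overline{(q_1,q_2)}=(\bar q_1,-q_2)$, inner product $\langle a,b\rangle=\mathrm{Re}(a\bar b)$ (real part of the first quaternion component) and $|a|^2=\langle a,a\rangle=|q_1|^2-|q_2|^2$ for $a=(q_1,q_2)$; this form has signature $(4,4)$ and satisfies $|ab|^2=|a|^2|b|^2$. *)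

theory Defs
  imports Complex_Main
begin

datatype quat = Quat (qre: real) (qi: real) (qj: real) (qk: real)

definition qadd :: "quat \<Rightarrow> quat \<Rightarrow> quat" where
  "qadd p q = Quat (qre p + qre q) (qi p + qi q) (qj p + qj q) (qk p + qk q)"

definition qmult :: "quat \<Rightarrow> quat \<Rightarrow> quat" where
  "qmult p q = Quat
     (qre p * qre q - qi p * qi q - qj p * qj q - qk p * qk q)
     (qre p * qi q + qi p * qre q + qj p * qk q - qk p * qj q)
     (qre p * qj q - qi p * qk q + qj p * qre q + qk p * qi q)
     (qre p * qk q + qi p * qj q - qj p * qi q + qk p * qre q)"

definition qcnj :: "quat \<Rightarrow> quat" where
  "qcnj q = Quat (qre q) (- qi q) (- qj q) (- qk q)"

definition qnorm2 :: "quat \<Rightarrow> real" where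
  "qnorm2 q = (qre q)\<^sup>2 + (qi q)\<^sup>2 + (qj q)\<^sup>2 + (qk q)\<^sup>2"

definition qzero :: quat where "qzero = Quat 0 0 0 0"
definition qone :: quat where "qone = Quat 1 0 0 0"

type_synonym paraoct = "quat \<times> quat"

definition pmult :: "paraoct \<Rightarrow> paraoct \<Rightarrow> paraoct" where
  "pmult a b = (case a of (q1, q2) \<Rightarrow> case b of (p1, p2) \<Rightarrow>
      (qadd (qmult q1 p1) (qmult (qcnj p2) q2), qadd (qmult p2 q1) (qmult q2 (qcnj p1))))"

definition pone :: paraoct where "pone = (qone, qzero)"

definition pnorm2 :: "paraoct \<Rightarrow> real" where
  "pnorm2 a = qnorm2 (fst a) - qnorm2 (snd a)"

definition Oplus :: "paraoct set" where
  "Oplus = {x. pnorm2 x > 0}"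

definition U1 :: "(paraoct \<times> paraoct \<times> paraoct) set" where
  "U1 = {(x, y, z). x = pone \<and> 1 + pnorm2 y + pnorm2 z > 0}"
definition U2 :: "(paraoct \<times> paraoct \<times> paraoct) set" where
  "U2 = {(x, y, z). y = pone \<and> pnorm2 x + 1 + pnorm2 z > 0}"
definition U3 :: "(paraoct \<times> paraoct \<times> paraoct) set" where
  "U3 = {(x, y, z). z = pone \<and> pnorm2 x + pnorm2 y + 1 > 0}"

definition Ucal :: "(paraoct \<times> paraoct \<times> paraoct) set" where
  "Ucal = U1 \<union> U2 \<union> U3"

definition proj_rel :: "((paraoct \<times> paraoct \<times> paraoct) \<times> (paraoct \<times> paraoct \<times> paraoct)) set" where
  "proj_rel = {((a, b, c), (d, e, f)). (a, b, c) \<in> Ucal \<and> (d, e, f) \<in> Ucal \<and>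
      (\<exists>l\<in>Oplus. a = pmult d l \<and> b = pmult e l \<and> c = pmult f l)}"

end

theory Submission imports Defs begin

definition pscale :: "real \<Rightarrow> paraoct \<Rightarrow> paraoct" where
  "pscale r a = (Quat (r * qre (fst a)) (r * qi (fst a)) (r * qj (fst a)) (r * qk (fst a)),
                 Quat (r * qre (snd a)) (r * qi (snd a)) (r * qj (snd a)) (r * qk (snd a)))"
definition pcnj :: "paraoct \<Rightarrow> paraoct" where
  "pcnj a = (qcnj (fst a), Quat (- qre (snd a)) (- qi (snd a)) (- qj (snd a)) (- qk (snd a)))"

lemma pexp: "\<exists>a b c d e f g h. x = (Quat a b c d, Quat e f g h)"
  by (metis prod.exhaust quat.exhaust)

lemmas D = pmult_def pscale_def pcnj_def qadd_def qmult_def qcnj_def pnorm2_def qnorm2_def pone_def qone_def qzero_def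

lemma one_l[simp]: "pmult pone x = x"
  using pexp[of x] by (auto simp: D)
lemma one_r[simp]: "pmult x pone = x"
  using pexp[of x] by (auto simp: D)
lemma norm_mult: "pnorm2 (pmult x y) = pnorm2 x * pnorm2 y"
  using pexp[of x] pexp[of y] by (auto simp: D power2_eq_square algebra_simps)
lemma cnj_l: "pmult (pcnj x) (pmult x y) = pscale (pnorm2 x) y"
  using pexp[of x] pexp[of y] by (auto simp: D power2_eq_square algebra_simps)
lemma cnj_l2: "pmult x (pmult (pcnj x) y) = pscale (pnorm2 x) y"
  using pexp[of x] pexp[of y] by (auto simp: D power2_eq_square algebra_simps)
lemma cnj_r: "pmult (pmult y x) (pcnj x) = pscale (pnorm2 x) y"
  using pexp[of x] pexp[of y] by (auto simp: D power2_eq_square algebra_simps)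
lemma cnj_self: "pmult x (pcnj x) = pscale (pnorm2 x) pone"
  using pexp[of x] by (auto simp: D power2_eq_square algebra_simps)
lemma cnj_mult: "pcnj (pmult a b) = pmult (pcnj b) (pcnj a)"
  using pexp[of a] pexp[of b] by (auto simp: D power2_eq_square algebra_simps)
lemma scale_l: "pmult (pscale r a) b = pscale r (pmult a b)"
  using pexp[of a] pexp[of b] by (auto simp: D power2_eq_square algebra_simps)
lemma scale_r: "pmult a (pscale r b) = pscale r (pmult a b)"
  using pexp[of a] pexp[of b] by (auto simp: D power2_eq_square algebra_simps)
lemma scale_scale: "pscale r (pscale s a) = pscale (r*s) a"
  using pexp[of a] by (auto simp: D)
lemma scale_1[simp]: "pscale 1 a = a"
  using pexp[of a] by (auto simp: D)
lemma norm_scale: "pnorm2 (pscale r a) = r^2 * pnorm2 a"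
  using pexp[of a] by (auto simp: D power2_eq_square algebra_simps)
lemma norm_cnj: "pnorm2 (pcnj a) = pnorm2 a"
  using pexp[of a] by (auto simp: D)
lemma norm_one[simp]: "pnorm2 pone = 1"
  by (simp add: D)
lemma inv_left:
  assumes "pmult w l = pone" shows "l = pscale (1 / pnorm2 w) (pcnj w)" "pnorm2 w \<noteq> 0"
proof -
  have "pnorm2 w * pnorm2 l = 1" using norm_mult[of w l] assms by simp
  then show nz: "pnorm2 w \<noteq> 0" by auto
  have "pscale (pnorm2 w) l = pcnj w" using cnj_l[of w l] assms by simp
  then have "pscale (1 / pnorm2 w) (pscale (pnorm2 w) l) = pscale (1 / pnorm2 w) (pcnj w)" by simp
  then show "l = pscale (1 / pnorm2 w) (pcnj w)" using nz by (simp add: scale_scale)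
qed

lemma inv_right:
  assumes "pmult x m = pone" shows "x = pscale (1 / pnorm2 m) (pcnj m)" "pnorm2 m \<noteq> 0"
proof -
  have "pnorm2 x * pnorm2 m = 1" using norm_mult[of x m] assms by simp
  then show nz: "pnorm2 m \<noteq> 0" by auto
  have "pscale (pnorm2 m) x = pcnj m" using cnj_r[where x=m and y=x] assms by simp
  then have "pscale (1 / pnorm2 m) (pscale (pnorm2 m) x) = pscale (1 / pnorm2 m) (pcnj m)" by simp
  then show "x = pscale (1 / pnorm2 m) (pcnj m)" using nz by (simp add: scale_scale)
qed

lemma coord:
  assumes "m = pone \<or> l = pone \<or> pmult m l = pone \<or> z = pone \<or> pmult z m = pone \<or> pmult (pmult z m) l = pone"
  shows "pmult (pmult z m) l = pmult z (pmult m l)"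
proof -
  consider "m = pone" | "l = pone" | "pmult m l = pone" | "z = pone" | "pmult z m = pone"
    | "pmult (pmult z m) l = pone" using assms by blast
  then show ?thesis
  proof cases
    case 3
    note L = inv_left[OF 3]
    have "pmult (pmult z m) l = z"
      using L by (simp add: scale_r cnj_r scale_scale)
    then show ?thesis using 3 by simp
  next
    case 5
    note L = inv_right[OF 5]
    have "pmult z (pmult m l) = l"
      using L by (simp add: scale_l cnj_l scale_scale)
    then show ?thesis using 5 by simp
  next
    case 6
    note L = inv_left[OF 6]
    have nz: "pnorm2 z \<noteq> 0" "pnorm2 m \<noteq> 0" using L(2) norm_mult[of z m] by auto
    have "pmult m l = pscale (1 / pnorm2 (pmult z m)) (pmult m (pmult (pcnj m) (pcnj z)))"
      using L(1) by (simp add: scale_r cnj_mult)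
    also have "\<dots> = pscale (1 / pnorm2 z) (pcnj z)"
      using nz by (simp add: cnj_l2 scale_scale norm_mult)
    finally have "pmult z (pmult m l) = pscale (1 / pnorm2 z) (pmult z (pcnj z))" by (simp add: scale_r)
    also have "\<dots> = pone" using nz by (simp add: cnj_self scale_scale)
    finally show ?thesis using 6 by simp
  qed simp_all
qed

theorem lemma6p1:
  shows "equiv Ucal proj_rel"
proof (rule equivI)
  show "proj_rel \<subseteq> Ucal \<times> Ucal"
  proof
    fix p assume "p \<in> proj_rel"
    then show "p \<in> Ucal \<times> Ucal"
      by (cases p) (auto simp: proj_rel_def)
  qed
next
  show "refl_on Ucal proj_rel"
  proof (rule refl_onI)
    fix x assume "x \<in> Ucal"
    then show "(x, x) \<in> proj_rel"
    proof -
      obtain a b c where x: "x = (a, b, c)" by (cases x)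
      have "pone \<in> Oplus" by (simp add: Oplus_def)
      then have "((a, b, c), (a, b, c)) \<in> proj_rel" using \<open>x \<in> Ucal\<close> x
        unfolding proj_rel_def by (simp only: mem_Collect_eq prod.case) (metis one_r)
      then show ?thesis using x by simp
    qed
  qed
next
  show "sym proj_rel"
  proof (rule symI)
    fix x y assume "(x, y) \<in> proj_rel"
    then obtain a b c d e f l where xy: "x = (a,b,c)" "y = (d,e,f)" "x \<in> Ucal" "y \<in> Ucal"
      "pnorm2 l > 0" "a = pmult d l" "b = pmult e l" "c = pmult f l"
      by (cases x, cases y) (auto simp: proj_rel_def Oplus_def)
    define m where "m = pscale (1 / pnorm2 l) (pcnj l)"
    have bk: "pmult (pmult u l) m = u" for u
      using xy(5) by (simp add: m_def scale_r cnj_r scale_scale)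
    have "pnorm2 m > 0" using xy(5) by (simp add: m_def norm_scale norm_cnj power2_eq_square)
    then have mO: "m \<in> Oplus" by (simp add: Oplus_def)
    have "d = pmult a m \<and> e = pmult b m \<and> f = pmult c m" using xy bk by simp
    then show "(y, x) \<in> proj_rel" using xy(1-4) mO
      unfolding proj_rel_def by (simp only: mem_Collect_eq prod.case) blast
  qed
next
  show "trans proj_rel"
  proof (rule transI)
    fix x y w assume "(x, y) \<in> proj_rel" "(y, w) \<in> proj_rel"
    then obtain a b c d e f g h k l m where xy: "x = (a,b,c)" "y = (d,e,f)" "w = (g,h,k)"
      "x \<in> Ucal" "y \<in> Ucal" "w \<in> Ucal"
      "pnorm2 l > 0" "a = pmult d l" "b = pmult e l" "c = pmult f l"
      "pnorm2 m > 0" "d = pmult g m" "e = pmult h m" "f = pmult k m"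
      by (cases x, cases y, cases w) (auto simp: proj_rel_def Oplus_def)
    have U: "g = pone \<or> h = pone \<or> k = pone"
        "pmult g m = pone \<or> pmult h m = pone \<or> pmult k m = pone"
        "pmult (pmult g m) l = pone \<or> pmult (pmult h m) l = pone \<or> pmult (pmult k m) l = pone"
      using xy by (auto simp: Ucal_def U1_def U2_def U3_def)
    have cg: "pmult (pmult g m) l = pmult g (pmult m l)"
      by (rule coord) (use U in auto)
    have ch: "pmult (pmult h m) l = pmult h (pmult m l)"
      by (rule coord) (use U in auto)
    have ck: "pmult (pmult k m) l = pmult k (pmult m l)"
      by (rule coord) (use U in auto)
    have "pnorm2 (pmult m l) > 0" using xy by (simp add: norm_mult)
    then have mO: "pmult m l \<in> Oplus" by (simp add: Oplus_def)
    have "a = pmult g (pmult m l) \<and> b = pmult h (pmult m l) \<and> c = pmult k (pmult m l)"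
      using xy cg ch ck by simp
    then show "(x, w) \<in> proj_rel" using xy(1-6) mO
      unfolding proj_rel_def by (simp only: mem_Collect_eq prod.case) blast
  qed
qed

end
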